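(* Let $m$ be a non-negative integer and let $A,D$ be $k$-tuples of elements of $\mathbb{Z}/m\mathbb{Z}$. Then for every non-negative integer $i$, $$\partial^i\,\mathrm{IAP}(A,D)=(-1)^i\,\mathrm{IAP}\big(AC_k^{(i)}+DT_k^{(i)},\,DC_k^{(i)}\big),$$ where $C_k^{(i)}=\big(\sum_{\alpha\in\mathbb{Z}}\binom{i}{\alpha k+r-s}\big)_{1\le r,s\le k}$ and $T_k^{(i)}=\big(\sum_{\alpha\in\mathbb{Z}}\alpha\binom{i}{\alpha k+r-s}\big)_{1\le r,s\le k}$.
   Context: $\mathbb{Z}/0\mathbb{Z}=\mathbb{Z}$; $\binom{a}{b}=0$ if $b<0$ or $b>a$. Tuples are row vectors, integer matrices act after reduction mod $m$. $\mathrm{IAP}(A,D)$, for $A=(a_0,\dots,a_{k-1})$, $D=(d_0,\dots,d_{k-1})$, is $(u_j)_{j\in\mathbb{Z}}$ with $u_{qk+r}=a_r+qd_r$. For a sequence $S=(u_j)_{j\in\mathbb{Z}}$, $\partial S=(-u_j-u_{j+1})_{j\in\mathbb{Z}}$, and $\partial^i$ is the $i$-th iterate ($\partial^0 S=S$). *)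

theory Defs
  imports Main "HOL-Library.Groups_Big_Fun" "HOL-Number_Theory.Cong"
begin

text \<open>Elements of Z/mZ are represented by integer representatives; equality in
Z/mZ is congruence modulo m (for m = 0 this is equality in Z).
A k-tuple (a_0,...,a_{k-1}) is a function nat => int (only values below k matter).\<close>

definition IAP :: "nat \<Rightarrow> (nat \<Rightarrow> int) \<Rightarrow> (nat \<Rightarrow> int) \<Rightarrow> int \<Rightarrow> int" where
  "IAP k A D j = A (nat (j mod int k)) + (j div int k) * D (nat (j mod int k))"

definition dseq :: "(int \<Rightarrow> int) \<Rightarrow> int \<Rightarrow> int" where
  "dseq S j = - S j - S (j + 1)"

definition ibinom :: "nat \<Rightarrow> int \<Rightarrow> int" where
  "ibinom a b = (if 0 \<le> b \<and> b \<le> int a then int (a choose nat b) else 0)"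

text \<open>Matrices C_k^(i), T_k^(i), with 0-based indices r, s < k (the entry depends
only on r - s, so the shift from 1-based indexing is harmless).\<close>
definition Cmat :: "nat \<Rightarrow> nat \<Rightarrow> nat \<Rightarrow> nat \<Rightarrow> int" where
  "Cmat k i r s = Sum_any (\<lambda>\<alpha>::int. ibinom i (\<alpha> * int k + int r - int s))"

definition Tmat :: "nat \<Rightarrow> nat \<Rightarrow> nat \<Rightarrow> nat \<Rightarrow> int" where
  "Tmat k i r s = Sum_any (\<lambda>\<alpha>::int. \<alpha> * ibinom i (\<alpha> * int k + int r - int s))"

definition vecmat :: "nat \<Rightarrow> (nat \<Rightarrow> int) \<Rightarrow> (nat \<Rightarrow> nat \<Rightarrow> int) \<Rightarrow> nat \<Rightarrow> int" where
  "vecmat k A M s = (\<Sum>r<k. A r * M r s)"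

end

theory Submission
  imports Defs
begin

lemma ibinom_Suc: "ibinom (Suc i) t = ibinom i t + ibinom i (t - 1)"
proof -
  consider "t < 0" | "t = 0" | "0 < t \<and> t \<le> int i" | "t = int i + 1" | "t > int i + 1" by linarith
  then show ?thesis
  proof cases
    case 3
    then have "Suc i choose nat t = (i choose (nat t - 1)) + (i choose nat t)"
      using choose_reduce_nat[of "Suc i" "nat t"] by simp
    moreover have "nat (t - 1) = nat t - 1" using 3 by simp
    ultimately show ?thesis using 3 by (simp add: ibinom_def)
  next
    case 4
    have "nat (int i + 1) = Suc i" by simp
    then show ?thesis using 4 by (simp add: ibinom_def)
  qed (auto simp add: ibinom_def)
qed

lemma ibinom_0: "ibinom 0 t = (if t = 0 then 1 else 0)"
  by (auto simp add: ibinom_def)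

lemma fin_ib: "finite {t. ibinom i t * X t \<noteq> 0}"
  by (rule finite_subset[of _ "{0..int i}"]) (auto simp add: ibinom_def split: if_splits)

lemma fin_ib1: "finite {t. ibinom i (t - 1) * X t \<noteq> 0}"
  by (rule finite_subset[of _ "{1..int i + 1}"]) (auto simp add: ibinom_def split: if_splits)

lemma dseq_pow:
  "(dseq ^^ i) S j = (-1) ^ i * Sum_any (\<lambda>t. ibinom i t * S (j + t))"
proof (induction i arbitrary: j)
  case 0
  have "Sum_any (\<lambda>t. ibinom 0 t * S (j + t)) = Sum_any (\<lambda>t. if t = 0 then S (j + t) else 0)"
    by (rule Sum_any.cong) (simp add: ibinom_0)
  also have "\<dots> = S j" using Sum_any.delta[of 0 "\<lambda>t. S (j + t)"] by simp
  finally have "Sum_any (\<lambda>t. ibinom 0 t * S (j + t)) = S j" .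
  then show ?case by simp
next
  case (Suc i)
  have sh: "Sum_any (\<lambda>t. ibinom i t * S (j + 1 + t)) = Sum_any (\<lambda>t. ibinom i (t - 1) * S (j + t))"
    by (rule Sum_any.reindex_cong[of "\<lambda>t. t - 1"])
       (auto simp add: bij_def inj_def surj_def fun_eq_iff intro: exI[of _ "_ + 1"] ac_simps)
  have "(dseq ^^ Suc i) S j = - (dseq ^^ i) S j - (dseq ^^ i) S (j + 1)"
    by (simp add: dseq_def)
  also have "\<dots> = - ((-1) ^ i * (Sum_any (\<lambda>t. ibinom i t * S (j + t))
                + Sum_any (\<lambda>t. ibinom i (t - 1) * S (j + t))))"
    using Suc sh by (simp add: algebra_simps)
  also have "Sum_any (\<lambda>t. ibinom i t * S (j + t)) + Sum_any (\<lambda>t. ibinom i (t - 1) * S (j + t))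
      = Sum_any (\<lambda>t. ibinom i t * S (j + t) + ibinom i (t - 1) * S (j + t))"
    by (rule Sum_any.distrib[symmetric]) (rule fin_ib, rule fin_ib1)
  also have "\<dots> = Sum_any (\<lambda>t. ibinom (Suc i) t * S (j + t))"
    by (simp add: ibinom_Suc algebra_simps)
  finally show ?case by simp
qed

lemma Sum_any_inj_reindex:
  fixes f :: "'a \<Rightarrow> int" and h :: "'b \<Rightarrow> 'a"
  assumes "inj h" "finite {x. f x \<noteq> 0}" "\<And>x. f x \<noteq> 0 \<Longrightarrow> x \<in> range h"
  shows "Sum_any (\<lambda>a. f (h a)) = Sum_any f"
proof -
  let ?T = "h -` {x. f x \<noteq> 0}"
  have fT: "finite ?T" using assms(1,2) by (intro finite_vimageI) (auto simp: inj_on_def)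
  have "Sum_any (\<lambda>a. f (h a)) = sum (\<lambda>a. f (h a)) ?T"
    by (rule Sum_any.expand_superset[OF fT]) auto
  also have "\<dots> = sum f (h ` ?T)"
    using assms(1) by (simp add: sum.reindex inj_on_def inj_def)
  also have "h ` ?T = {x. f x \<noteq> 0}" using assms(3) by auto
  also have "sum f {x. f x \<noteq> 0} = Sum_any f" by (simp add: Sum_any.expand_set)
  finally show ?thesis .
qed

lemma Sum_any_split_mod:
  fixes g :: "int \<Rightarrow> int" and c :: int
  assumes k: "k \<ge> 1" and fg: "finite {t. g t \<noteq> 0}"
  shows "Sum_any g = (\<Sum>r<k. Sum_any (\<lambda>\<alpha>. g (\<alpha> * int k + int r - c)))"
proof -
  define f where "f r t = (if (t + c) mod int k = int r then g t else 0)" for r t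
  have each: "Sum_any (\<lambda>\<alpha>. g (\<alpha> * int k + int r - c)) = Sum_any (f r)" if "r < k" for r
  proof -
    have "Sum_any (\<lambda>\<alpha>. g (\<alpha> * int k + int r - c)) = Sum_any (\<lambda>\<alpha>. f r (\<alpha> * int k + int r - c))"
      using that by (intro Sum_any.cong) (simp add: f_def)
    also have "\<dots> = Sum_any (f r)"
    proof (rule Sum_any_inj_reindex)
      show "inj (\<lambda>\<alpha>. \<alpha> * int k + int r - c)" using k by (auto simp: inj_def)
      show "finite {x. f r x \<noteq> 0}" by (rule finite_subset[OF _ fg]) (auto simp: f_def)
      fix x assume "f r x \<noteq> 0"
      then have "(x + c) mod int k = int r" by (auto simp: f_def split: if_splits)
      then have "x = ((x + c) div int k) * int k + int r - c"
        by (metis add_diff_cancel_right' div_mult_mod_eq)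
      then show "x \<in> range (\<lambda>\<alpha>. \<alpha> * int k + int r - c)" by blast
    qed
    finally show ?thesis .
  qed
  have "(\<Sum>r<k. Sum_any (\<lambda>\<alpha>. g (\<alpha> * int k + int r - c))) = (\<Sum>r<k. Sum_any (f r))"
    using each by simp
  also have "\<dots> = (\<Sum>r<k. sum (f r) {t. g t \<noteq> 0})"
    by (intro sum.cong refl Sum_any.expand_superset fg) (auto simp: f_def split: if_splits)
  also have "\<dots> = sum (\<lambda>t. \<Sum>r<k. f r t) {t. g t \<noteq> 0}" by (rule sum.swap)
  also have "\<dots> = sum g {t. g t \<noteq> 0}"
  proof (intro sum.cong refl)
    fix t
    have "(\<Sum>r<k. f r t) = (\<Sum>r<k. if r = nat ((t + c) mod int k) then g t else 0)"
      by (intro sum.cong refl) (auto simp: f_def)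
    also have "\<dots> = g t" using k by (simp add: nat_less_iff)
    finally show "(\<Sum>r<k. f r t) = g t" .
  qed
  also have "\<dots> = Sum_any g" by (simp add: Sum_any.expand_set)
  finally show ?thesis ..
qed

lemma fin_alpha:
  assumes k: "k \<ge> 1"
  shows "finite {\<alpha>::int. ibinom i (\<alpha> * int k + c) * X \<alpha> \<noteq> 0}"
proof (rule finite_subset[of _ "{- \<bar>c\<bar> .. int i + \<bar>c\<bar>}"])
  show "{\<alpha>::int. ibinom i (\<alpha> * int k + c) * X \<alpha> \<noteq> 0} \<subseteq> {- \<bar>c\<bar> .. int i + \<bar>c\<bar>}"
  proof
    fix \<alpha> assume "\<alpha> \<in> {\<alpha>::int. ibinom i (\<alpha> * int k + c) * X \<alpha> \<noteq> 0}"
    then have h: "0 \<le> \<alpha> * int k + c" "\<alpha> * int k + c \<le> int i"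
      by (auto simp: ibinom_def split: if_splits)
    have "\<alpha> < 0 \<Longrightarrow> \<alpha> * int k \<le> \<alpha>" using k
      by (metis mult.right_neutral mult_left_mono_neg of_nat_1 of_nat_le_iff less_imp_le)
    moreover have "\<alpha> \<ge> 0 \<Longrightarrow> \<alpha> \<le> \<alpha> * int k" using k
      by (metis mult.right_neutral mult_left_mono of_nat_1 of_nat_le_iff)
    ultimately have "- \<bar>c\<bar> \<le> \<alpha> \<and> \<alpha> \<le> int i + \<bar>c\<bar>" using h
      by (cases "\<alpha> < 0"; simp add: abs_if; linarith)
    then show "\<alpha> \<in> {- \<bar>c\<bar> .. int i + \<bar>c\<bar>}" by simp
  qed
qed simp

lemma IAP_shift:
  assumes k: "k \<ge> 1" and r: "r < k"
  shows "IAP k A D (x * int k + int r) = A r + x * D r"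
proof -
  have "(x * int k + int r) mod int k = int r" using r by simp
  moreover have "(x * int k + int r) div int k = x" using r k by simp
  ultimately show ?thesis by (simp add: IAP_def)
qed

theorem proposition6:
  fixes m k i :: nat and A D :: "nat \<Rightarrow> int"
  assumes "k \<ge> 1"
  shows "\<forall>j::int. [(dseq ^^ i) (IAP k A D) j
            = (-1) ^ i * IAP k (\<lambda>s. vecmat k A (Cmat k i) s + vecmat k D (Tmat k i) s)
                                 (vecmat k D (Cmat k i)) j] (mod int m)"
proof
  fix j :: int
  define s where "s = nat (j mod int k)"
  define q where "q = j div int k"
  have ks: "int s = j mod int k" using assms by (simp add: s_def)
  have sk: "s < k" using assms by (simp add: s_def nat_less_iff)
  have jq: "j = q * int k + int s" using ks by (simp add: q_def)
  define g where "g t = ibinom i t * IAP k A D (j + t)" for t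
  have "Sum_any g = (\<Sum>r<k. Sum_any (\<lambda>\<alpha>. g (\<alpha> * int k + int r - int s)))"
    by (rule Sum_any_split_mod[OF assms]) (unfold g_def, rule fin_ib)
  also have "\<dots> = (\<Sum>r<k. A r * Cmat k i r s + D r * Tmat k i r s + q * (D r * Cmat k i r s))"
  proof (rule sum.cong[OF refl])
    fix r assume "r \<in> {..<k}"
    then have r: "r < k" by simp
    define b where "b \<alpha> = ibinom i (\<alpha> * int k + (int r - int s))" for \<alpha>
    have fb: "finite {\<alpha>. b \<alpha> * X \<alpha> \<noteq> 0}" for X
      unfolding b_def by (rule fin_alpha[OF assms])
    have fb0: "finite {\<alpha>. b \<alpha> \<noteq> 0}" using fb[of "\<lambda>_. 1"] by simp
    have "Sum_any (\<lambda>\<alpha>. g (\<alpha> * int k + int r - int s))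
        = Sum_any (\<lambda>\<alpha>. (b \<alpha> * A r + b \<alpha> * (q * D r)) + (\<alpha> * b \<alpha>) * D r)"
    proof (rule Sum_any.cong)
      fix \<alpha>
      have "j + (\<alpha> * int k + int r - int s) = (q + \<alpha>) * int k + int r"
        using jq by (simp add: algebra_simps)
      then show "g (\<alpha> * int k + int r - int s) = (b \<alpha> * A r + b \<alpha> * (q * D r)) + (\<alpha> * b \<alpha>) * D r"
        using IAP_shift[OF assms r, where x = "q + \<alpha>" and A = A and D = D]
        by (simp add: g_def b_def algebra_simps)
    qed
    also have "\<dots> = Sum_any (\<lambda>\<alpha>. b \<alpha> * A r + b \<alpha> * (q * D r)) + Sum_any (\<lambda>\<alpha>. (\<alpha> * b \<alpha>) * D r)"
      by (rule Sum_any.distrib) (rule finite_subset[OF _ fb0], auto)+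
    also have "Sum_any (\<lambda>\<alpha>. b \<alpha> * A r + b \<alpha> * (q * D r)) = Sum_any (\<lambda>\<alpha>. b \<alpha> * A r) + Sum_any (\<lambda>\<alpha>. b \<alpha> * (q * D r))"
      by (rule Sum_any.distrib) (rule finite_subset[OF _ fb0], auto)+
    also have "Sum_any (\<lambda>\<alpha>. b \<alpha> * A r) = Sum_any b * A r"
      by (rule Sum_any_left_distrib[symmetric, OF fb0])
    also have "Sum_any (\<lambda>\<alpha>. b \<alpha> * (q * D r)) = Sum_any b * (q * D r)"
      by (rule Sum_any_left_distrib[symmetric, OF fb0])
    also have "Sum_any (\<lambda>\<alpha>. (\<alpha> * b \<alpha>) * D r) = Sum_any (\<lambda>\<alpha>. \<alpha> * b \<alpha>) * D r"
      by (rule Sum_any_left_distrib[symmetric]) (rule finite_subset[OF _ fb0], auto)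
    also have "Sum_any b = Cmat k i r s"
      unfolding Cmat_def b_def by (intro Sum_any.cong) (simp add: algebra_simps)
    also have "Sum_any (\<lambda>\<alpha>. \<alpha> * b \<alpha>) = Tmat k i r s"
      unfolding Tmat_def b_def by (intro Sum_any.cong) (simp add: algebra_simps)
    finally show "Sum_any (\<lambda>\<alpha>. g (\<alpha> * int k + int r - int s))
        = A r * Cmat k i r s + D r * Tmat k i r s + q * (D r * Cmat k i r s)"
      by (simp add: algebra_simps)
  qed
  also have "\<dots> = vecmat k A (Cmat k i) s + vecmat k D (Tmat k i) s + q * vecmat k D (Cmat k i) s"
    by (simp add: vecmat_def sum.distrib sum_distrib_left)
  also have "\<dots> = IAP k (\<lambda>s. vecmat k A (Cmat k i) s + vecmat k D (Tmat k i) s)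
                                 (vecmat k D (Cmat k i)) j"
    by (simp add: IAP_def s_def q_def algebra_simps)
  finally have "(dseq ^^ i) (IAP k A D) j = (-1) ^ i * IAP k (\<lambda>s. vecmat k A (Cmat k i) s + vecmat k D (Tmat k i) s)
                                 (vecmat k D (Cmat k i)) j"
    by (simp add: dseq_pow g_def)
  then show "[(dseq ^^ i) (IAP k A D) j
            = (-1) ^ i * IAP k (\<lambda>s. vecmat k A (Cmat k i) s + vecmat k D (Tmat k i) s)
                                 (vecmat k D (Cmat k i)) j] (mod int m)"
    by simp
qed

end
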